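(* Consider a slotted system with diversity. There are $N$ users, $N_{sub}\ge2$ sub-carriers and slots $1,\dots,T$. In every slot, independently, the BS chooses a user uniformly at random and a sub-carrier uniformly at random, and sends an update to the chosen user on the chosen sub-carrier. The adversary uses a blocking matrix $\sigma\in\{0,1\}^{N_{sub}\times T}$, where $\sigma_j(t)=0$ means sub-carrier $j$ is blocked in slot $t$. Feasibility means $\sum_{j,t}(1-\sigma_j(t))\le\alpha T$ and at most one sub-carrier is blocked per slot, where $0<\alpha<1$. Ages satisfy $a_i(1)=1$, $a_i(t+1)=1$ if user $i$ is chosen in slot $t$ on an unblocked sub-carrier, and $a_i(t+1)=a_i(t)+1$ otherwise. The average age is $\Delta^{\sigma}_T=\frac1T\sum_{t=1}^T\frac1N\sum_i\mathbb E[a_i(t)]$. Then $$\limsup_{T\to\infty}\ \sup_{\sigma\text{ feasible}}\Delta^{\sigma}_T\le\frac{N N_{sub}}{N_{sub}-1}.$$ *)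

theory Defs
  imports "HOL-Probability.Probability"
begin

(* Users are 0..<N, sub-carriers 0..<Nsub, slots 1..T.
   An outcome w :: nat => nat * nat gives, for each slot t, the chosen (user, sub-carrier).
   A blocking matrix sig :: nat => nat => nat, sig j t in {0,1}; sig j t = 0 means
   sub-carrier j is blocked in slot t. *)

definition feasible :: "nat \<Rightarrow> nat \<Rightarrow> real \<Rightarrow> (nat \<Rightarrow> nat \<Rightarrow> nat) \<Rightarrow> bool" where
  "feasible Nsub T \<alpha> sig \<longleftrightarrow>
     (\<forall>j<Nsub. \<forall>t\<in>{1..T}. sig j t \<in> {0, 1}) \<and>
     real (\<Sum>j<Nsub. \<Sum>t=1..T. 1 - sig j t) \<le> \<alpha> * real T \<and>
     (\<forall>t\<in>{1..T}. card {j. j < Nsub \<and> sig j t = 0} \<le> 1)"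

(* age_aux sig w i n = a_i(n+1) *)
fun age_aux :: "(nat \<Rightarrow> nat \<Rightarrow> nat) \<Rightarrow> (nat \<Rightarrow> nat \<times> nat) \<Rightarrow> nat \<Rightarrow> nat \<Rightarrow> nat" where
  "age_aux sig w i 0 = 1"
| "age_aux sig w i (Suc n) =
     (if fst (w (Suc n)) = i \<and> sig (snd (w (Suc n))) (Suc n) = 1 then 1
      else age_aux sig w i n + 1)"

definition age :: "(nat \<Rightarrow> nat \<Rightarrow> nat) \<Rightarrow> (nat \<Rightarrow> nat \<times> nat) \<Rightarrow> nat \<Rightarrow> nat \<Rightarrow> nat" where
  "age sig w i t = age_aux sig w i (t - 1)"

definition slots_pmf :: "nat \<Rightarrow> nat \<Rightarrow> nat \<Rightarrow> (nat \<Rightarrow> nat \<times> nat) pmf" where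
  "slots_pmf N Nsub T = Pi_pmf {1..T} (0, 0) (\<lambda>_. pmf_of_set ({..<N} \<times> {..<Nsub}))"

definition avg_age :: "nat \<Rightarrow> nat \<Rightarrow> nat \<Rightarrow> (nat \<Rightarrow> nat \<Rightarrow> nat) \<Rightarrow> real" where
  "avg_age N Nsub T sig =
     (1 / real T) * (\<Sum>t=1..T. (1 / real N) *
        (\<Sum>i<N. measure_pmf.expectation (slots_pmf N Nsub T) (\<lambda>w. real (age sig w i t))))"

end

theory Submission
  imports Defs
begin

lemma integral_pair_pmf_finite:
  fixes h :: "'a \<times> 'b \<Rightarrow> real"
  assumes "finite (set_pmf p)" "finite (set_pmf q)"
  shows "measure_pmf.expectation (pair_pmf p q) h =
         measure_pmf.expectation p (\<lambda>a. measure_pmf.expectation q (\<lambda>b. h (a, b)))"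
proof -
  have "measure_pmf.expectation (pair_pmf p q) h =
        (\<Sum>x\<in>set_pmf p \<times> set_pmf q. h x * pmf (pair_pmf p q) x)"
    using assms by (intro integral_measure_pmf_real) auto
  also have "\<dots> = (\<Sum>a\<in>set_pmf p. \<Sum>b\<in>set_pmf q. h (a,b) * (pmf p a * pmf q b))"
    by (subst sum.cartesian_product, intro sum.cong refl) (auto simp: pmf_pair)
  also have "\<dots> = (\<Sum>a\<in>set_pmf p. (\<Sum>b\<in>set_pmf q. h (a,b) * pmf q b) * pmf p a)"
    by (intro sum.cong refl, subst sum_distrib_right) (simp add: mult_ac)
  also have "\<dots> = (\<Sum>a\<in>set_pmf p. measure_pmf.expectation q (\<lambda>b. h (a, b)) * pmf p a)"
    using assms by (intro sum.cong refl, subst integral_measure_pmf_real[where A="set_pmf q"]) auto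
  also have "\<dots> = measure_pmf.expectation p (\<lambda>a. measure_pmf.expectation q (\<lambda>b. h (a, b)))"
    using assms by (intro integral_measure_pmf_real[symmetric]) auto
  finally show ?thesis .
qed

lemma fin_arith:
  fixes E K cS m Ns :: real
  assumes IH: "E \<le> K" and m: "m \<le> cS - (Ns - 1)" and m0: "m \<ge> 0" and Kp: "K * (Ns - 1) = cS"
   and K0: "K \<ge> 0" and cS: "cS > 0"
  shows "(cS + E * m) / cS \<le> K"
proof -
  have "E * m \<le> K * m" by (rule mult_right_mono[OF IH m0])
  also have "\<dots> \<le> K * (cS - (Ns - 1))" by (rule mult_left_mono[OF m K0])
  also have "\<dots> = K * cS - cS" using Kp by (simp add: right_diff_distrib)
  finally have "cS + E * m \<le> K * cS" by simp
  thus ?thesis using cS by (simp add: pos_divide_le_eq)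
qed
lemma age_aux_upd:
  "m > n \<Longrightarrow> age_aux sig (f(m := y)) i n = age_aux sig f i n"
  by (induction n) auto

lemma main_bound:
  fixes N Nsub :: nat and sig :: "nat \<Rightarrow> nat \<Rightarrow> nat"
  assumes N: "N \<ge> 1" and Ns: "Nsub \<ge> 2" and i: "i < N"
  and slots: "\<And>t. t \<in> {1..n} \<Longrightarrow> (\<forall>j<Nsub. sig j t \<in> {0,1}) \<and> card {j. j < Nsub \<and> sig j t = 0} \<le> 1"
  and A: "finite A" "{1..n} \<subseteq> A"
  shows "measure_pmf.expectation (Pi_pmf A (0,0) (\<lambda>_. pmf_of_set ({..<N} \<times> {..<Nsub})))
           (\<lambda>w. real (age_aux sig w i n)) \<le> real N * real Nsub / (real Nsub - 1)"
  using slots A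
proof (induction n arbitrary: A)
  case 0
  have "1 \<le> real N * real Nsub / (real Nsub - 1)"
  proof -
    have "1 * real Nsub \<le> real N * real Nsub" using N by (intro mult_right_mono) simp_all
    hence "real Nsub - 1 \<le> real N * real Nsub" by linarith
    thus ?thesis using Ns by (simp add: le_divide_eq)
  qed
  then show ?case by simp
next
  case (Suc n)
  define S where "S = {..<N} \<times> {..<Nsub}"
  define U where "U = pmf_of_set S"
  define K where "K = real N * real Nsub / (real Nsub - 1)"
  define B where "B = A - {Suc n}"
  define c where "c = (\<lambda>y::nat\<times>nat. fst y = i \<and> sig (snd y) (Suc n) = 1)"
  have SA: "Suc n \<in> A" using Suc.prems by auto
  have Aeq: "A = insert (Suc n) B" "Suc n \<notin> B" "finite B" using SA Suc.prems by (auto simp: B_def)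
  have Sfin: "finite S" by (simp add: S_def)
  have S00: "(0,0) \<in> S" using N Ns by (simp add: S_def)
  hence Sne: "S \<noteq> {}" by auto
  have cardS: "card S = N * Nsub" by (simp add: S_def card_cartesian_product)
  have finU: "finite (set_pmf U)" using Sfin Sne by (simp add: U_def)
  have finB: "finite (set_pmf (Pi_pmf B (0,0) (\<lambda>_. U)))"
    using Aeq Sfin Sne by (simp add: set_Pi_pmf U_def finite_PiE_dflt)
  define E where "E = measure_pmf.expectation (Pi_pmf B (0,0) (\<lambda>_. U)) (\<lambda>w. real (age_aux sig w i n))"
  have Bsub: "{1..n} \<subseteq> B" using Suc.prems(3) by (auto simp: B_def)
  have intB: "integrable (measure_pmf (Pi_pmf B (0,0) (\<lambda>_. U))) (\<lambda>w. real (age_aux sig w i n))"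
    by (rule integrable_measure_pmf_finite[OF finB])
  have IH: "E \<le> K" unfolding E_def K_def U_def S_def
    using Suc.prems(1) Bsub Aeq(3) by (intro Suc.IH) auto
  have E0: "E \<ge> 0" unfolding E_def by simp
  have "measure_pmf.expectation (Pi_pmf A (0,0) (\<lambda>_. U)) (\<lambda>w. real (age_aux sig w i (Suc n)))
     = measure_pmf.expectation (pair_pmf U (Pi_pmf B (0,0) (\<lambda>_. U)))
         (\<lambda>(y,f). if c y then 1 else real (age_aux sig f i n) + 1)"
    by (subst Aeq(1), subst Pi_pmf_insert[OF Aeq(3) Aeq(2)], simp only: integral_map_pmf,
        intro Bochner_Integration.integral_cong refl) (auto simp: age_aux_upd c_def split: prod.splits)
  also have "\<dots> = measure_pmf.expectation U (\<lambda>y. measure_pmf.expectation (Pi_pmf B (0,0) (\<lambda>_. U))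
         (\<lambda>f. if c y then 1 else real (age_aux sig f i n) + 1))"
    by (subst integral_pair_pmf_finite[OF finU finB]) simp
  also have "\<dots> = measure_pmf.expectation U (\<lambda>y. if c y then 1 else E + 1)"
    using intB by (intro Bochner_Integration.integral_cong refl) (auto simp: E_def)
  also have "\<dots> = (\<Sum>y\<in>S. (if c y then 1 else E + 1)) / card S"
    unfolding U_def using Sfin Sne by (simp add: integral_pmf_of_set)
  also have "(\<Sum>y\<in>S. (if c y then 1 else E + 1)) = (\<Sum>y\<in>S. 1 + E * (if c y then 0 else 1))"
    by (intro sum.cong) auto
  also have "\<dots> = card S + E * card {y\<in>S. \<not> c y}"
    by (simp add: sum.distrib sum_distrib_left[symmetric] sum.If_cases Sfin)
       (rule disjI2, rule arg_cong[where f=card], auto)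
  finally have eq: "measure_pmf.expectation (Pi_pmf A (0,0) (\<lambda>_. U)) (\<lambda>w. real (age_aux sig w i (Suc n)))
      = (card S + E * card {y\<in>S. \<not> c y}) / card S" .
  define G where "G = {j. j < Nsub \<and> sig j (Suc n) = 1}"
  define Z where "Z = {j. j < Nsub \<and> sig j (Suc n) = 0}"
  have sl: "(\<forall>j<Nsub. sig j (Suc n) \<in> {0,1}) \<and> card Z \<le> 1"
    using Suc.prems(1)[of "Suc n"] by (simp add: Z_def)
  have "{..<Nsub} \<subseteq> G \<union> Z" using sl by (auto simp: G_def Z_def)
  hence "card {..<Nsub} \<le> card (G \<union> Z)" by (intro card_mono) (auto simp: G_def Z_def)
  hence "Nsub \<le> card (G \<union> Z)" by simp
  also have "\<dots> \<le> card G + card Z" by (rule card_Un_le)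
  finally have cG: "Nsub - 1 \<le> card G" using sl by linarith
  have sub: "{i} \<times> G \<subseteq> {y\<in>S. c y}" using i by (auto simp: S_def G_def c_def)
  have "card ({i} \<times> G) \<le> card {y\<in>S. c y}" using sub Sfin by (intro card_mono) auto
  hence cc: "Nsub - 1 \<le> card {y\<in>S. c y}" using cG by (simp add: card_cartesian_product)
  have "card {y\<in>S. \<not> c y} + card {y\<in>S. c y} = card S"
  proof -
    have "card S = card ({y\<in>S. \<not> c y} \<union> {y\<in>S. c y})"
      by (rule arg_cong[where f=card]) auto
    also have "\<dots> = card {y\<in>S. \<not> c y} + card {y\<in>S. c y}"
      using Sfin by (intro card_Un_disjoint) auto
    finally show ?thesis by simp
  qed
  hence mn: "card {y\<in>S. \<not> c y} + (Nsub - 1) \<le> N * Nsub"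
    using cc cardS by linarith
  have "real (card {y\<in>S. \<not> c y} + (Nsub - 1)) \<le> real (N * Nsub)"
    using mn by (simp only: of_nat_le_iff)
  hence m: "real (card {y\<in>S. \<not> c y}) \<le> real N * real Nsub - (real Nsub - 1)"
    using Ns by (simp add: of_nat_diff)
  have Kp: "K * (real Nsub - 1) = real N * real Nsub" using Ns by (simp add: K_def)
  have K0: "K \<ge> 0" using Ns by (simp add: K_def)
  have "(real N * real Nsub + E * card {y\<in>S. \<not> c y}) / (real N * real Nsub) \<le> K"
    by (rule fin_arith[OF IH m _ Kp K0]) (use N Ns in auto)
  hence "(card S + E * card {y\<in>S. \<not> c y}) / card S \<le> K"
    by (simp only: cardS of_nat_mult)
  then show ?case using eq unfolding U_def S_def K_def by simp
qed


theorem theorem9: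
  fixes N Nsub :: nat and \<alpha> :: real
  assumes "N \<ge> 1" and "Nsub \<ge> 2" and "0 < \<alpha>" and "\<alpha> < 1"
  shows "limsup (\<lambda>T. SUP sig \<in> {sig. feasible Nsub T \<alpha> sig}. ereal (avg_age N Nsub T sig))
           \<le> ereal (real N * real Nsub / (real Nsub - 1))"
proof -
  define K where "K = real N * real Nsub / (real Nsub - 1)"
  have K0: "K \<ge> 0" using assms(2) by (simp add: K_def)
  have bound: "avg_age N Nsub T sig \<le> K" if f: "feasible Nsub T \<alpha> sig" for T sig
  proof -
    have fs: "(\<forall>j<Nsub. sig j t' \<in> {0,1}) \<and> card {j. j < Nsub \<and> sig j t' = 0} \<le> 1"
      if "t' \<in> {1..T}" for t'
      using f that unfolding feasible_def by blast
    have e: "measure_pmf.expectation (slots_pmf N Nsub T) (\<lambda>w. real (age sig w i t)) \<le> K"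
      if it: "i < N" "t \<in> {1..T}" for i t
    proof -
      have sl: "(\<forall>j<Nsub. sig j t' \<in> {0,1}) \<and> card {j. j < Nsub \<and> sig j t' = 0} \<le> 1"
        if "t' \<in> {1..t-1}" for t'
        using that it(2) by (intro fs) auto
      show ?thesis
        unfolding slots_pmf_def age_def K_def
        by (rule main_bound[OF assms(1) assms(2) it(1) sl]) (use it(2) in auto)
    qed
    show ?thesis
    proof (cases "T = 0")
      case True
      then show ?thesis using K0 by (simp add: avg_age_def)
    next
      case False
      have "(\<Sum>t=1..T. (1 / real N) *
          (\<Sum>i<N. measure_pmf.expectation (slots_pmf N Nsub T) (\<lambda>w. real (age sig w i t))))
          \<le> (\<Sum>t=1..T. (1 / real N) * (\<Sum>i<N. K))"
        using e by (intro sum_mono mult_left_mono) auto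
      also have "\<dots> = real T * K" using assms(1) by simp
      finally have "avg_age N Nsub T sig \<le> (1 / real T) * (real T * K)"
        unfolding avg_age_def by (intro mult_left_mono) auto
      also have "\<dots> = K" using False by simp
      finally show ?thesis .
    qed
  qed
  have "(SUP sig \<in> {sig. feasible Nsub T \<alpha> sig}. ereal (avg_age N Nsub T sig)) \<le> ereal K" for T
    using bound by (intro SUP_least) auto
  hence "limsup (\<lambda>T. SUP sig \<in> {sig. feasible Nsub T \<alpha> sig}. ereal (avg_age N Nsub T sig)) \<le> ereal K"
    by (intro Limsup_bounded always_eventually) auto
  thus ?thesis by (simp add: K_def)
qed

end
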